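(* Let $X>0$, $n\ge1$, let $A_0,A_1$ be $X$-periodic $\mathbb{C}^{n\times n}$-valued functions in $L^2_{\rm per}([0,X])$, let $L=\partial_x^2+\partial_xA_1+A_0$ act on $L^2_{\rm per}([0,X];\mathbb{C}^n)$, and for $J\in\mathbb{N}$ let $P_J$ be the orthogonal projection onto $\mathcal{H}_J=\operatorname{span}\{e^{2\pi ikx/X}v:\ |k|\le J,\ v\in\mathbb{C}^n\}$. Let $L_J=P_JLP_J|_{\mathcal{H}_J}$ (the Hill truncation $\mathcal{D}_J^2+\mathcal{D}_J\mathcal{A}_{1,J}+\mathcal{A}_{0,J}$) and $K_J(\lambda)=P_JK(\lambda)P_J|_{\mathcal{H}_J}$, where $K(\lambda)=\partial_x(\partial_x^2-1)^{-1}A_1+(\partial_x^2-1)^{-1}(A_0+(1-\lambda)I)$. Define $D_J(\lambda)={\det}_2(I+K_J(\lambda))$ on $\mathcal{H}_J$. Then the zeros of $D_J$ coincide with the eigenvalues of the matrix $L_J$, and the order of each zero equals the algebraic multiplicity of the eigenvalue.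
   Context: In Fourier coordinates, $\mathcal{D}_J$ is the diagonal matrix of the multipliers $2\pi ik/X$, $|k|\le J$, and $\mathcal{A}_{m,J}$ is the block Toeplitz matrix $(\hat A_m(j-k))_{|j|,|k|\le J}$. On a finite-dimensional space ${\det}_2(I-A)=\det(I-A)e^{\operatorname{tr}A}$, and ${\det}_2(I+K)$ means ${\det}_2(I-(-K))$. *)

theory Defs
  imports "HOL-Complex_Analysis.Complex_Analysis" "Jordan_Normal_Form.Char_Poly"
begin

definition fourier_coeff :: "real \<Rightarrow> (real \<Rightarrow> complex) \<Rightarrow> int \<Rightarrow> complex" where
  "fourier_coeff X f k =
     complex_of_real (1 / X) *
       (LINT x:{0..X}|lebesgue. cis (- 2 * pi * real_of_int k * x / X) * f x)"

text \<open>Fourier coordinates on H_J: index i < n(2J+1) corresponds to the basis vector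
  e^{2 pi i k x / X} e_a with k = i div n - J, a = i mod n.\<close>
definition hdim :: "nat \<Rightarrow> nat \<Rightarrow> nat" where
  "hdim n J = n * (2 * J + 1)"

definition freq :: "nat \<Rightarrow> nat \<Rightarrow> nat \<Rightarrow> int" where
  "freq n J i = int (i div n) - int J"

definition comp :: "nat \<Rightarrow> nat \<Rightarrow> nat" where
  "comp n i = i mod n"

definition mult_dx :: "real \<Rightarrow> int \<Rightarrow> complex" where
  "mult_dx X k = 2 * pi * \<i> * of_int k / of_real X"

definition DJ :: "real \<Rightarrow> nat \<Rightarrow> nat \<Rightarrow> complex mat" where
  "DJ X n J = mat (hdim n J) (hdim n J)
     (\<lambda>(i, j). if i = j then mult_dx X (freq n J i) else 0)"

text \<open>Fourier multiplier of (d^2/dx^2 - 1)^{-1}, truncated to H_J.\<close>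
definition RJ :: "real \<Rightarrow> nat \<Rightarrow> nat \<Rightarrow> complex mat" where
  "RJ X n J = mat (hdim n J) (hdim n J)
     (\<lambda>(i, j). if i = j then 1 / ((mult_dx X (freq n J i))\<^sup>2 - 1) else 0)"

definition toeplitzJ :: "real \<Rightarrow> nat \<Rightarrow> nat \<Rightarrow> (real \<Rightarrow> nat \<Rightarrow> nat \<Rightarrow> complex) \<Rightarrow> complex mat" where
  "toeplitzJ X n J A = mat (hdim n J) (hdim n J)
     (\<lambda>(i, j). fourier_coeff X (\<lambda>x. A x (comp n i) (comp n j)) (freq n J i - freq n J j))"

definition LJ :: "real \<Rightarrow> nat \<Rightarrow> nat \<Rightarrow> (real \<Rightarrow> nat \<Rightarrow> nat \<Rightarrow> complex)
                   \<Rightarrow> (real \<Rightarrow> nat \<Rightarrow> nat \<Rightarrow> complex) \<Rightarrow> complex mat" where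
  "LJ X n J A0 A1 = DJ X n J * DJ X n J + DJ X n J * toeplitzJ X n J A1 + toeplitzJ X n J A0"

definition KJ :: "real \<Rightarrow> nat \<Rightarrow> nat \<Rightarrow> (real \<Rightarrow> nat \<Rightarrow> nat \<Rightarrow> complex)
                   \<Rightarrow> (real \<Rightarrow> nat \<Rightarrow> nat \<Rightarrow> complex) \<Rightarrow> complex \<Rightarrow> complex mat" where
  "KJ X n J A0 A1 z =
     DJ X n J * RJ X n J * toeplitzJ X n J A1
     + RJ X n J * (toeplitzJ X n J A0 + (1 - z) \<cdot>\<^sub>m 1\<^sub>m (hdim n J))"

definition mat_trace :: "complex mat \<Rightarrow> complex" where
  "mat_trace A = (\<Sum>i<dim_row A. A $$ (i, i))"

definition det2_I_minus :: "complex mat \<Rightarrow> complex" where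
  "det2_I_minus A = Determinant.det (1\<^sub>m (dim_row A) - A) * exp (mat_trace A)"

definition DJfun :: "real \<Rightarrow> nat \<Rightarrow> nat \<Rightarrow> (real \<Rightarrow> nat \<Rightarrow> nat \<Rightarrow> complex)
                   \<Rightarrow> (real \<Rightarrow> nat \<Rightarrow> nat \<Rightarrow> complex) \<Rightarrow> complex \<Rightarrow> complex" where
  "DJfun X n J A0 A1 z = det2_I_minus (- KJ X n J A0 A1 z)"

definition L2_per_mat :: "real \<Rightarrow> nat \<Rightarrow> (real \<Rightarrow> nat \<Rightarrow> nat \<Rightarrow> complex) \<Rightarrow> bool" where
  "L2_per_mat X n A \<longleftrightarrow>
     (\<forall>x. A (x + X) = A x) \<and>
     (\<forall>a<n. \<forall>b<n. set_borel_measurable lebesgue {0..X} (\<lambda>x. A x a b) \<and>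
                  set_integrable lebesgue {0..X} (\<lambda>x. (cmod (A x a b))\<^sup>2))"

end

theory Submission
  imports Defs
begin

definition diagm :: "nat \<Rightarrow> (nat \<Rightarrow> complex) \<Rightarrow> complex mat" where
  "diagm N a = mat N N (\<lambda>(i, j). if i = j then a i else 0)"

lemma diagm_carrier[simp]: "diagm N a \<in> carrier_mat N N"
  by (simp add: diagm_def)

lemma diagm_mult: "diagm N a * diagm N b = diagm N (\<lambda>i. a i * b i)"
proof (rule eq_matI)
  fix i j assume ij: "i < dim_row (diagm N (\<lambda>i. a i * b i))" "j < dim_col (diagm N (\<lambda>i. a i * b i))"
  hence i: "i < N" and j: "j < N" by (auto simp: diagm_def)
  have "(diagm N a * diagm N b) $$ (i, j) = (\<Sum>k<N. (if i = k then a i else 0) * (if k = j then b k else 0))"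
    using i j by (simp add: diagm_def scalar_prod_def lessThan_atLeast0)
  also have "\<dots> = (\<Sum>k<N. if k = i then (if i = j then a i * b i else 0) else 0)"
    by (rule sum.cong) auto
  also have "\<dots> = (if i = j then a i * b i else 0)"
    using i by simp
  finally show "(diagm N a * diagm N b) $$ (i, j) = diagm N (\<lambda>i. a i * b i) $$ (i, j)"
    using i j by (simp add: diagm_def)
qed (auto simp: diagm_def)

lemma DJ_diagm: "DJ X n J = diagm (hdim n J) (\<lambda>i. mult_dx X (freq n J i))"
  by (simp add: DJ_def diagm_def)

lemma RJ_diagm: "RJ X n J = diagm (hdim n J) (\<lambda>i. 1 / ((mult_dx X (freq n J i))\<^sup>2 - 1))"
  by (simp add: RJ_def diagm_def)

lemma mult_dx_sq_ne: "(mult_dx X k)\<^sup>2 - 1 \<noteq> 0"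
proof
  assume h: "(mult_dx X k)\<^sup>2 - 1 = 0"
  have "(mult_dx X k)\<^sup>2 = - complex_of_real ((2 * pi * of_int k / X)\<^sup>2)"
    by (simp add: mult_dx_def power2_eq_square field_simps)
  with h have "complex_of_real (- (2 * pi * of_int k / X)\<^sup>2 - 1) = 0" by simp
  hence "- (2 * pi * of_int k / X)\<^sup>2 - 1 = (0::real)" by (simp only: of_real_eq_0_iff)
  moreover have "(2 * pi * of_int k / X)\<^sup>2 \<ge> 0" by simp
  ultimately show False by linarith
qed

theorem lemma3p7:
  fixes X :: real and n J :: nat and A0 A1 :: "real \<Rightarrow> nat \<Rightarrow> nat \<Rightarrow> complex"
  assumes "X > 0" and "n \<ge> 1"
    and "L2_per_mat X n A0" and "L2_per_mat X n A1"
  shows "\<forall>z::complex.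
           (DJfun X n J A0 A1 z = 0 \<longleftrightarrow> eigenvalue (LJ X n J A0 A1) z) \<and>
           (eigenvalue (LJ X n J A0 A1) z \<longrightarrow>
              zorder (DJfun X n J A0 A1) z = int (order z (char_poly (LJ X n J A0 A1))))"
proof -
  define N where "N = hdim n J"
  define D where "D = DJ X n J"
  define R where "R = RJ X n J"
  define T0 where "T0 = toeplitzJ X n J A0"
  define T1 where "T1 = toeplitzJ X n J A1"
  define L where "L = LJ X n J A0 A1"
  define p where "p = char_poly L"
  define M where "M = D * R * T1 + R * T0"
  define K where "K = KJ X n J A0 A1"
  define d where "d = (\<lambda>i. mult_dx X (freq n J i))"
  define r where "r = (\<lambda>i. 1 / ((mult_dx X (freq n J i))\<^sup>2 - 1))"
  have D': "D = diagm N d" by (simp add: D_def DJ_diagm N_def d_def)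
  have R': "R = diagm N r" by (simp add: R_def RJ_diagm N_def r_def)
  have cD: "D \<in> carrier_mat N N" and cR: "R \<in> carrier_mat N N" using D' R' by auto
  have cT0: "T0 \<in> carrier_mat N N" and cT1: "T1 \<in> carrier_mat N N"
    by (auto simp: T0_def T1_def toeplitzJ_def N_def)
  have cL: "L \<in> carrier_mat N N" using cD cT0 cT1
    by (simp add: L_def LJ_def D_def[symmetric] T0_def[symmetric] T1_def[symmetric])
  have cM: "M \<in> carrier_mat N N" using cD cR cT0 cT1 by (simp add: M_def)
  have DR: "D * R = R * D" unfolding D' R' diagm_mult by (simp add: mult.commute)
  have RDD: "R * (D * D) = 1\<^sub>m N + R"
  proof -
    have "R * (D * D) = diagm N (\<lambda>i. r i * (d i * d i))" unfolding D' R' diagm_mult ..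
    also have "\<dots> = diagm N (\<lambda>i. 1 + r i)"
    proof -
      have "r i * (d i * d i) = 1 + r i" for i
        using mult_dx_sq_ne[of X "freq n J i"]
        by (simp add: r_def d_def power2_eq_square field_simps)
      thus ?thesis by simp
    qed
    also have "\<dots> = 1\<^sub>m N + R" unfolding R' by (rule eq_matI) (auto simp: diagm_def)
    finally show ?thesis .
  qed
  have Kz: "K z = M + (1 - z) \<cdot>\<^sub>m R" for z
  proof -
    have "R * (T0 + (1 - z) \<cdot>\<^sub>m 1\<^sub>m N) = R * T0 + (1 - z) \<cdot>\<^sub>m R"
      proof -
      have "R * ((1 - z) \<cdot>\<^sub>m 1\<^sub>m N) = (1 - z) \<cdot>\<^sub>m (R * 1\<^sub>m N)"
        by (rule mult_smult_distrib[OF cR one_carrier_mat])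
      thus ?thesis using cR cT0 by (simp add: mult_add_distrib_mat[of _ N N _ N])
    qed
    thus ?thesis using cD cR cT0 cT1
      by (simp add: K_def KJ_def M_def D_def[symmetric] R_def[symmetric] T0_def[symmetric]
          T1_def[symmetric] N_def[symmetric] assoc_add_mat[of _ N N])
  qed
  have key: "1\<^sub>m N + K z = R * char_matrix L z" for z
  proof -
    have L': "L = D * D + D * T1 + T0"
      by (simp add: L_def LJ_def D_def T0_def T1_def)
    have "R * ((- z) \<cdot>\<^sub>m 1\<^sub>m N) = (- z) \<cdot>\<^sub>m (R * 1\<^sub>m N)"
      by (rule mult_smult_distrib[OF cR one_carrier_mat])
    hence "R * char_matrix L z = R * L + (- z) \<cdot>\<^sub>m R"
      using cR cL by (simp add: char_matrix_def mult_add_distrib_mat[of _ N N _ N])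
    also have "R * L = R * (D * D) + R * (D * T1) + R * T0"
      unfolding L' using cR cD cT0 cT1 by (simp add: mult_add_distrib_mat[of _ N N _ N])
    finally have "R * char_matrix L z = R * (D * D) + R * (D * T1) + R * T0 + (- z) \<cdot>\<^sub>m R" .
    also have "\<dots> = 1\<^sub>m N + K z"
    proof -
      have "D * R * T1 = R * D * T1" by (simp only: DR)
      also have "\<dots> = R * (D * T1)" using cR cD cT1 by (rule assoc_mult_mat)
      finally have e: "R * (D * T1) = D * R * T1" by simp
      have cDRT: "D * R * T1 \<in> carrier_mat N N" "R * T0 \<in> carrier_mat N N" using cR cD cT0 cT1 by auto
      show ?thesis unfolding Kz RDD M_def e
      proof (rule eq_matI)
        fix i j assume "i < dim_row (1\<^sub>m N + (D * R * T1 + R * T0 + (1 - z) \<cdot>\<^sub>m R))"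
          "j < dim_col (1\<^sub>m N + (D * R * T1 + R * T0 + (1 - z) \<cdot>\<^sub>m R))"
        hence ij: "i < N" "j < N" using cDRT cR by auto
        show "(1\<^sub>m N + R + D * R * T1 + R * T0 + - z \<cdot>\<^sub>m R) $$ (i, j) =
          (1\<^sub>m N + (D * R * T1 + R * T0 + (1 - z) \<cdot>\<^sub>m R)) $$ (i, j)"
          using ij cDRT cR by (simp del: index_mult_mat assoc_mult_mat add: algebra_simps)
      qed (use cDRT cR in auto)
    qed
    finally show ?thesis by simp
  qed
  have detR: "det R \<noteq> 0"
  proof -
    have "det R = (\<Prod>i = 0..<N. R $$ (i, i))"
      using det_upper_triangular[OF _ cR] by (simp add: prod_list_diag_prod R' diagm_def upper_triangular_def)
    also have "\<dots> = (\<Prod>i = 0..<N. r i)" by (simp add: R' diagm_def)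
    also have "\<dots> \<noteq> 0" using mult_dx_sq_ne by (simp add: r_def)
    finally show ?thesis .
  qed
  have cK: "K z \<in> carrier_mat N N" for z unfolding Kz using cM cR by simp
  have detchar: "det (char_matrix L z) = (-1)^N * poly p z" for z
  proof -
    have cC: "char_matrix L z \<in> carrier_mat N N" using cL by simp
    have "- char_matrix L z = (-1) \<cdot>\<^sub>m char_matrix L z"
      using cC by (intro eq_matI) auto
    hence "poly p z = (-1)^N * det (char_matrix L z)"
      using cC by (simp add: p_def char_poly_matrix[OF cL])
    hence "(-1)^N * poly p z = ((-1)^N * (-1)^N) * det (char_matrix L z)" by simp
    also have "(-1)^N * (-1)^N = (1::complex)" by (simp add: power_mult_distrib[symmetric])
    finally show ?thesis by simp
  qed
  define c where "c = det R * (-1)^N"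
  have c0: "c \<noteq> 0" using detR by (simp add: c_def)
  define tr where "tr = (\<lambda>z. \<Sum>i<N. - (M $$ (i, i) + (1 - z) * r i))"
  have F: "DJfun X n J A0 A1 z = c * poly p z * exp (tr z)" for z
  proof -
    have e1: "1\<^sub>m (dim_row (- K z)) - (- K z) = 1\<^sub>m N + K z"
      using cK[of z] by (intro eq_matI) auto
    have e2: "mat_trace (- K z) = tr z"
      unfolding mat_trace_def tr_def using cK[of z] cM cR
      by (intro sum.cong) (auto simp: Kz R' diagm_def)
    have "det (1\<^sub>m N + K z) = det R * det (char_matrix L z)"
      unfolding key using cR cL by (simp add: det_mult[of _ N])
    thus ?thesis
      unfolding DJfun_def K_def[symmetric] det2_I_minus_def e1 e2 detchar c_def by simp
  qed
  have hol: "tr holomorphic_on UNIV" unfolding tr_def by (intro holomorphic_intros)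
  have p0: "p \<noteq> 0"
    using degree_monic_char_poly[OF cL] by (auto simp: p_def)
  show ?thesis
  proof (intro allI conjI impI)
    fix z
    show "(DJfun X n J A0 A1 z = 0) = eigenvalue (LJ X n J A0 A1) z"
      unfolding L_def[symmetric] eigenvalue_root_char_poly[OF cL] F using c0 by (simp add: p_def)
  next
    fix z assume "eigenvalue (LJ X n J A0 A1) z"
    obtain q where q: "p = [:- z, 1:] ^ order z p * q" and nd: "\<not> [:- z, 1:] dvd q"
      using order_decomp[OF p0] by blast
    have qz: "poly q z \<noteq> 0" using nd by (simp add: poly_eq_0_iff_dvd)
    have "zorder (DJfun X n J A0 A1) z = int (order z p)"
    proof (rule zorder_eqI[where S=UNIV and g="\<lambda>w. c * poly q w * exp (tr w)"])
      show "(\<lambda>w. c * poly q w * exp (tr w)) holomorphic_on UNIV"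
        using hol by (intro holomorphic_intros) (auto intro: holomorphic_on_compose[unfolded o_def, where g=exp])
      show "c * poly q z * exp (tr z) \<noteq> 0" using c0 qz by simp
      fix w
      show "DJfun X n J A0 A1 w = c * poly q w * exp (tr w) * (w - z) powi int (order z p)"
        unfolding F by (subst q) (simp add: poly_power algebra_simps)
    qed auto
    thus "zorder (DJfun X n J A0 A1) z = int (order z (char_poly (LJ X n J A0 A1)))"
      by (simp add: p_def L_def)
  qed
qed

end
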